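(* Let $\beta=\beta_n\ge0$ with $n\beta_n\to0$, and let $(\delta_n)$ be a positive sequence with $\log(\delta_n)/\log n\to0$. Set $b_n=\sqrt{2\log n}-\frac{\log\log n+2\log\delta_n+\log(4\pi)}{2\sqrt{2\log n}}$. Let $k$ be an integer with $1\le k\le n$. Then for $n$ large enough, $$\frac{Z_{n-k,1-\frac{k\beta}{4b_n^2},\beta}}{Z_{n-k,\beta}}\le 4^k,\qquad \frac{Z_{n-k,\beta}}{Z_{n,\beta}}\le\Big(\sqrt{\tfrac{2}{\pi}}\Big)^k.$$
   Context: For $\alpha>0$, $\beta\ge0$, $m\ge1$, $Z_{m,\alpha,\beta}=\int_{\mathbb{R}^m}\exp(-\frac{\alpha}{2}\sum_{i=1}^m\lambda_i^2)\prod_{1\le i<j\le m}|\lambda_i-\lambda_j|^\beta\prod_{i=1}^m\mathrm{d}\lambda_i$, and $Z_{m,\beta}=Z_{m,1,\beta}$. For $m=0$ these are taken to equal $1$. *)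

theory Defs
  imports "HOL-Analysis.Analysis"
begin

text \<open>Points of R^m are rendered as functions nat => real restricted to {..<m},
  with the product Lebesgue measure PiM {..<m} (\<lambda>_. lborel).\<close>

definition selberg_integrand :: "nat \<Rightarrow> real \<Rightarrow> real \<Rightarrow> (nat \<Rightarrow> real) \<Rightarrow> real" where
  "selberg_integrand m \<alpha> \<beta> x =
     exp (- (\<alpha> / 2) * (\<Sum>i<m. (x i)\<^sup>2)) *
     (\<Prod>p\<in>{(i, j). i < j \<and> j < m}. \<bar>x (fst p) - x (snd p)\<bar> powr \<beta>)"

definition Zab :: "nat \<Rightarrow> real \<Rightarrow> real \<Rightarrow> real" where
  "Zab m \<alpha> \<beta> =
     (if m = 0 then 1
      else integral\<^sup>L (PiM {..<m} (\<lambda>_. lborel)) (selberg_integrand m \<alpha> \<beta>))"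

definition Zb :: "nat \<Rightarrow> real \<Rightarrow> real" where
  "Zb m \<beta> = Zab m 1 \<beta>"

definition bseq :: "(nat \<Rightarrow> real) \<Rightarrow> nat \<Rightarrow> real" where
  "bseq \<delta> n = sqrt (2 * ln (real n))
     - (ln (ln (real n)) + 2 * ln (\<delta> n) + ln (4 * pi)) / (2 * sqrt (2 * ln (real n)))"

end

theory Submission
  imports Defs "HOL-Probability.Distributions"
begin

definition gg :: "real \<Rightarrow> real" where
  "gg u = indicator {0<..1} u * u powr (-1/2::real)"

lemma gg_integrable: "integrable lborel gg"
proof -
  have "integrable lebesgue (\<lambda>x. indicat_real {0<..1} x *\<^sub>R x powr (-1/2::real))"
    by (intro nonnegative_absolutely_integrable_1 [unfolded set_integrable_def] integrable_on_powr_from_0') auto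
  then have "integrable lebesgue gg" by (simp add: gg_def[abs_def])
  moreover have "gg \<in> borel_measurable lborel" unfolding gg_def by measurable
  ultimately show ?thesis using integrable_completion by blast
qed

definition LL :: "real \<Rightarrow> real" where
  "LL u = 2 * (gg u + gg (- u))"

lemma LL_integrable: "integrable lborel LL"
proof -
  have "integrable lborel (\<lambda>x. gg (0 + (-1) * x))"
    by (rule lborel_integrable_real_affine[OF gg_integrable]) simp
  then show ?thesis unfolding LL_def[abs_def] using gg_integrable by simp
qed

lemma LL_nonneg: "LL u \<ge> 0"
  by (simp add: LL_def gg_def indicator_def)

lemma LL_shift: "integrable lborel (\<lambda>y. LL (a - y))" "(\<integral>y. LL (a - y) \<partial>lborel) = (\<integral>u. LL u \<partial>lborel)"
proof -
  show "integrable lborel (\<lambda>y. LL (a - y))"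
    using lborel_integrable_real_affine[OF LL_integrable, of "-1" a] by simp
  show "(\<integral>y. LL (a - y) \<partial>lborel) = (\<integral>u. LL u \<partial>lborel)"
    using lborel_integral_real_affine[of "-1" LL a] by simp
qed

lemma ln_ge_sqrt: fixes a :: real assumes "0 < a" shows "ln a \<ge> - 2 * a powr (-1/2::real)"
proof -
  have s: "sqrt a > 0" using assms by simp
  have e1: "ln a = 2 * ln (sqrt a)" using assms by (simp add: ln_sqrt)
  have e2: "ln (sqrt a) = - ln (1 / sqrt a)" using s by (simp add: ln_div)
  have e3: "ln (1 / sqrt a) \<le> 1 / sqrt a - 1" using s by (intro ln_le_minus_one) simp
  have "ln a \<ge> - 2 * (1 / sqrt a)" using e1 e2 e3 by linarith
  moreover have "a powr (-1/2::real) = 1 / sqrt a" using assms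
    by (simp add: powr_minus_divide powr_half_sqrt)
  ultimately show ?thesis by simp
qed

lemma factor_bound:
  assumes "u \<noteq> 0" "b \<ge> 0"
  shows "\<bar>u\<bar> powr b \<ge> 1 - b * LL u"
proof (cases "\<bar>u\<bar> \<le> 1")
  case True
  have a: "\<bar>u\<bar> > 0" using assms by simp
  have "\<bar>u\<bar> powr b = exp (b * ln \<bar>u\<bar>)" using a by (simp add: powr_def)
  also have "\<dots> \<ge> 1 + b * ln \<bar>u\<bar>" by (rule exp_ge_add_one_self)
  finally have 1: "\<bar>u\<bar> powr b \<ge> 1 + b * ln \<bar>u\<bar>" .
  have "LL u = 2 * \<bar>u\<bar> powr (-1/2::real)"
    using True a by (cases "u > 0") (auto simp: LL_def gg_def indicator_def)
  moreover have "b * ln \<bar>u\<bar> \<ge> b * (- 2 * \<bar>u\<bar> powr (-1/2::real))"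
    using ln_ge_sqrt[OF a] assms(2) by (intro mult_left_mono) auto
  ultimately show ?thesis using 1 by simp
next
  case False
  have "\<bar>u\<bar> powr b \<ge> 1" using False assms by (intro ge_one_powr_ge_zero) auto
  moreover have "b * LL u \<ge> 0" using assms LL_nonneg by simp
  ultimately show ?thesis by linarith
qed

lemma prod_ge_one_minus_sum:
  fixes f v :: "'a \<Rightarrow> real"
  assumes "finite S" "\<And>i. i \<in> S \<Longrightarrow> f i \<ge> 0" "\<And>i. i \<in> S \<Longrightarrow> f i \<ge> 1 - v i"
    "\<And>i. i \<in> S \<Longrightarrow> v i \<ge> 0"
  shows "(\<Prod>i\<in>S. f i) \<ge> 1 - (\<Sum>i\<in>S. v i)"
  using assms
proof (induction S rule: finite_induct)
  case empty then show ?case by simp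
next
  case (insert a S)
  have IH: "(\<Prod>i\<in>S. f i) \<ge> 1 - (\<Sum>i\<in>S. v i)" using insert by auto
  have P: "(\<Prod>i\<in>S. f i) \<ge> 0" using insert by (auto intro: prod_nonneg)
  have fa: "f a \<ge> 0" "f a \<ge> 1 - v a" "v a \<ge> 0" using insert by auto
  have Sv: "(\<Sum>i\<in>S. v i) \<ge> 0" using insert by (auto intro: sum_nonneg)
  show ?case
  proof (cases "1 - v a - (\<Sum>i\<in>S. v i) \<le> 0")
    case True
    have "f a * (\<Prod>i\<in>S. f i) \<ge> 0" using fa P by simp
    then show ?thesis using insert True by simp
  next
    case False
    then have h1: "1 - v a \<ge> 0" "1 - (\<Sum>i\<in>S. v i) \<ge> 0" using fa Sv by auto
    have "f a * (\<Prod>i\<in>S. f i) \<ge> (1 - v a) * (1 - (\<Sum>i\<in>S. v i))"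
      using IH fa P h1 by (intro mult_mono) auto
    moreover have "(1 - v a) * (1 - (\<Sum>i\<in>S. v i)) \<ge> 1 - v a - (\<Sum>i\<in>S. v i)"
      using fa Sv by (simp add: algebra_simps)
    ultimately show ?thesis using insert by simp
  qed
qed

lemma ennreal_integral_le_nn:
  fixes F :: "'a \<Rightarrow> real"
  assumes "integrable M F"
  shows "ennreal (integral\<^sup>L M F) \<le> (\<integral>\<^sup>+x. ennreal (F x) \<partial>M)"
proof -
  have i2: "integrable M (\<lambda>x. max 0 (F x))" using assms by auto
  have "integral\<^sup>L M F \<le> integral\<^sup>L M (\<lambda>x. max 0 (F x))"
    using assms i2 by (intro integral_mono) auto
  also have "\<dots> = enn2real (\<integral>\<^sup>+x. ennreal (max 0 (F x)) \<partial>M)"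
    using i2 by (intro integral_eq_nn_integral) auto
  also have "\<dots> = enn2real (\<integral>\<^sup>+x. ennreal (F x) \<partial>M)"
    by (simp add: ennreal_max_0)
  finally have "ennreal (integral\<^sup>L M F) \<le> ennreal (enn2real (\<integral>\<^sup>+x. ennreal (F x) \<partial>M))"
    by (rule ennreal_leI)
  also have "\<dots> \<le> (\<integral>\<^sup>+x. ennreal (F x) \<partial>M)"
    by (cases "(\<integral>\<^sup>+x. ennreal (F x) \<partial>M)") auto
  finally show ?thesis .
qed

lemma gauss_int: "integrable lborel (\<lambda>y. exp (- ((y::real)\<^sup>2 / 2)))" "(\<integral>y. exp (- ((y::real)\<^sup>2 / 2)) \<partial>lborel) = sqrt (2*pi)"
proof -
  have eq: "(\<lambda>y. exp (- ((y::real)\<^sup>2 / 2))) = (\<lambda>y. sqrt (2*pi) * normal_density 0 1 y)"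
    by (auto simp: normal_density_def fun_eq_iff)
  show "integrable lborel (\<lambda>y. exp (- ((y::real)\<^sup>2 / 2)))" unfolding eq by auto
  show "(\<integral>y. exp (- ((y::real)\<^sup>2 / 2)) \<partial>lborel) = sqrt (2*pi)" unfolding eq by simp
qed

definition CL :: real where "CL = (\<integral>u. LL u \<partial>lborel)"

lemma CL_nonneg: "CL \<ge> 0"
  unfolding CL_def by (rule integral_nonneg_AE) (simp add: LL_nonneg)

lemma inner_lb:
  fixes x :: "nat \<Rightarrow> real" and b :: real
  assumes b: "b \<ge> 0"
  shows "ennreal (sqrt (2*pi) - b * real j * CL)
     \<le> (\<integral>\<^sup>+y. ennreal (exp (- ((y::real)\<^sup>2 / 2)) * (\<Prod>i<j. \<bar>x i - y\<bar> powr b)) \<partial>lborel)"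
proof -
  define F where "F y = exp (- ((y::real)\<^sup>2 / 2)) - b * (\<Sum>i<j. LL (x i - y))" for y
  have intF: "integrable lborel F"
    unfolding F_def[abs_def] using gauss_int(1) LL_shift(1) by (intro Bochner_Integration.integrable_diff integrable_mult_right integrable_sum) auto
  have "integral\<^sup>L lborel F = sqrt (2*pi) - b * (\<Sum>i<j. (\<integral>y. LL (x i - y) \<partial>lborel))"
    unfolding F_def[abs_def] using gauss_int LL_shift(1)
    by (subst Bochner_Integration.integral_diff) (auto intro!: integrable_sum simp: integral_sum)
  also have "\<dots> = sqrt (2*pi) - b * real j * CL"
    by (simp add: LL_shift(2) CL_def)
  finally have IF: "integral\<^sup>L lborel F = sqrt (2*pi) - b * real j * CL" .
  have AE: "AE y in lborel. y \<notin> x ` {..<j}"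
    by (intro AE_not_in countable_imp_null_set_lborel) auto
  have "(\<integral>\<^sup>+y. ennreal (F y) \<partial>lborel) \<le> (\<integral>\<^sup>+y. ennreal (exp (- ((y::real)\<^sup>2 / 2)) * (\<Prod>i<j. \<bar>x i - y\<bar> powr b)) \<partial>lborel)"
  proof (rule nn_integral_mono_AE, use AE in eventually_elim)
    case (elim y)
    have ne: "x i - y \<noteq> 0" if "i < j" for i using elim that by auto
    have P: "(\<Prod>i<j. \<bar>x i - y\<bar> powr b) \<ge> 1 - (\<Sum>i<j. b * LL (x i - y))"
      using ne factor_bound b LL_nonneg by (intro prod_ge_one_minus_sum) auto
    define e where "e = exp (- ((y::real)\<^sup>2 / 2))"
    have e: "0 < e" "e \<le> 1" unfolding e_def by auto
    define S where "S = (\<Sum>i<j. b * LL (x i - y))"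
    have S: "S \<ge> 0" unfolding S_def using b LL_nonneg by (auto intro: sum_nonneg)
    have "e * (\<Prod>i<j. \<bar>x i - y\<bar> powr b) \<ge> e * (1 - S)"
      using P e unfolding S_def by (intro mult_left_mono) auto
    moreover have "e * (1 - S) \<ge> e - S"
    proof -
      have "S * e \<le> S * 1" using e S by (intro mult_left_mono) auto
      then show ?thesis by (simp add: algebra_simps)
    qed
    ultimately have "e - S \<le> e * (\<Prod>i<j. \<bar>x i - y\<bar> powr b)" by linarith
    moreover have "F y = e - S" unfolding F_def e_def S_def by (simp add: sum_distrib_left)
    ultimately have "F y \<le> e * (\<Prod>i<j. \<bar>x i - y\<bar> powr b)" by simp
    then show ?case unfolding e_def by (intro ennreal_leI)
  qed
  moreover have "ennreal (integral\<^sup>L lborel F) \<le> (\<integral>\<^sup>+y. ennreal (F y) \<partial>lborel)"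
    by (rule ennreal_integral_le_nn[OF intF])
  ultimately show ?thesis using IF by simp
qed


definition NN :: "nat \<Rightarrow> real \<Rightarrow> real \<Rightarrow> ennreal" where
  "NN m a b = (\<integral>\<^sup>+x. ennreal (selberg_integrand m a b x) \<partial>PiM {..<m} (\<lambda>_. lborel))"

abbreviation pairs :: "nat \<Rightarrow> (nat \<times> nat) set" where
  "pairs m \<equiv> {(i, j). i < j \<and> j < m}"

lemma pairs_finite: "finite (pairs m)"
  by (rule finite_subset[of _ "{..<m} \<times> {..<m}"]) auto

lemma pairs_card: "card (pairs m) \<le> m * m"
proof -
  have "card (pairs m) \<le> card ({..<m} \<times> {..<m})"
    by (rule card_mono) auto
  then show ?thesis by (simp add: card_cartesian_product)
qed

lemma sel_nonneg: "selberg_integrand m a b x \<ge> 0"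
  unfolding selberg_integrand_def by (auto intro!: prod_nonneg mult_nonneg_nonneg)

lemma sel_meas[measurable]: "selberg_integrand m a b \<in> borel_measurable (PiM {..<m} (\<lambda>_. lborel))"
proof -
  have c: "(\<lambda>x. x i) \<in> borel_measurable (PiM {..<m} (\<lambda>_. lborel))" if "i < m" for i
  proof -
    have "(\<lambda>x. x i) \<in> measurable (PiM {..<m} (\<lambda>_. lborel)) lborel"
      using that by (intro measurable_component_singleton) auto
    then show ?thesis by simp
  qed
  show ?thesis
    unfolding selberg_integrand_def[abs_def]
    using c by (intro borel_measurable_times borel_measurable_exp borel_measurable_times borel_measurable_sum
        borel_measurable_prod) auto
qed

lemma sel_zero: "selberg_integrand 0 a b x = 1"
  unfolding selberg_integrand_def by simp

lemma NN_zero: "NN 0 a b = 1"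
  unfolding NN_def by (simp add: sel_zero PiM_empty)

lemma Zab_NN: "Zab m a b = enn2real (NN m a b)"
proof (cases "m = 0")
  case True then show ?thesis by (simp add: Zab_def NN_zero)
next
  case False then show ?thesis
    unfolding Zab_def NN_def using sel_nonneg by (simp add: integral_eq_nn_integral)
qed

lemma pairs_Suc: "pairs (Suc j) = pairs j \<union> (\<lambda>i. (i, j)) ` {..<j}"
  by auto

lemma sel_split:
  "selberg_integrand (Suc j) 1 b (x(j := y)) =
     selberg_integrand j 1 b x * (exp (- (y\<^sup>2 / 2)) * (\<Prod>i<j. \<bar>x i - y\<bar> powr b))"
proof -
  have s: "(\<Sum>i<Suc j. ((x(j := y)) i)\<^sup>2) = (\<Sum>i<j. (x i)\<^sup>2) + y\<^sup>2"
    by simp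
  have d: "pairs j \<inter> (\<lambda>i. (i, j)) ` {..<j} = {}" by auto
  have p: "(\<Prod>p\<in>pairs (Suc j). \<bar>(x(j := y)) (fst p) - (x(j := y)) (snd p)\<bar> powr b)
     = (\<Prod>p\<in>pairs j. \<bar>x (fst p) - x (snd p)\<bar> powr b) * (\<Prod>i<j. \<bar>x i - y\<bar> powr b)"
    unfolding pairs_Suc
    by (subst prod.union_disjoint[OF pairs_finite _ d]) (auto simp: prod.reindex inj_on_def intro!: prod.cong arg_cong2[where f="(*)"])
  show ?thesis
    unfolding selberg_integrand_def s p
    by (simp add: exp_add[symmetric] algebra_simps)
qed


lemma NN_step:
  assumes b: "b \<ge> 0"
  shows "ennreal (sqrt (2*pi) - b * real j * CL) * NN j 1 b \<le> NN (Suc j) 1 b"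
proof -
  interpret product_sigma_finite "\<lambda>_::nat. lborel" by standard
  define c where "c = sqrt (2*pi) - b * real j * CL"
  have "NN (Suc j) 1 b = (\<integral>\<^sup>+x. ennreal (selberg_integrand (Suc j) 1 b x) \<partial>PiM (insert j {..<j}) (\<lambda>_. lborel))"
    unfolding NN_def by (simp add: lessThan_Suc)
  also have "\<dots> = (\<integral>\<^sup>+x. (\<integral>\<^sup>+y. ennreal (selberg_integrand (Suc j) 1 b (x(j := y))) \<partial>lborel) \<partial>PiM {..<j} (\<lambda>_. lborel))"
    by (rule product_nn_integral_insert) (auto simp flip: lessThan_Suc)
  also have "\<dots> = (\<integral>\<^sup>+x. ennreal (selberg_integrand j 1 b x) *
       (\<integral>\<^sup>+y. ennreal (exp (- (y\<^sup>2 / 2)) * (\<Prod>i<j. \<bar>x i - y\<bar> powr b)) \<partial>lborel) \<partial>PiM {..<j} (\<lambda>_. lborel))"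
  proof (rule nn_integral_cong)
    fix x
    have "(\<integral>\<^sup>+y. ennreal (selberg_integrand (Suc j) 1 b (x(j := y))) \<partial>lborel)
        = (\<integral>\<^sup>+y. ennreal (selberg_integrand j 1 b x) * ennreal (exp (- (y\<^sup>2 / 2)) * (\<Prod>i<j. \<bar>x i - y\<bar> powr b)) \<partial>lborel)"
      by (intro nn_integral_cong) (simp add: sel_split ennreal_mult sel_nonneg prod_nonneg)
    also have "\<dots> = ennreal (selberg_integrand j 1 b x) * (\<integral>\<^sup>+y. ennreal (exp (- (y\<^sup>2 / 2)) * (\<Prod>i<j. \<bar>x i - y\<bar> powr b)) \<partial>lborel)"
      by (rule nn_integral_cmult) measurable
    finally show "(\<integral>\<^sup>+y. ennreal (selberg_integrand (Suc j) 1 b (x(j := y))) \<partial>lborel) = \<dots>" .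
  qed
  also have "\<dots> \<ge> (\<integral>\<^sup>+x. ennreal (selberg_integrand j 1 b x) * ennreal c \<partial>PiM {..<j} (\<lambda>_. lborel))"
    unfolding c_def by (intro nn_integral_mono mult_left_mono inner_lb b) auto
  moreover have "(\<integral>\<^sup>+x. ennreal (selberg_integrand j 1 b x) * ennreal c \<partial>PiM {..<j} (\<lambda>_. lborel)) = ennreal c * NN j 1 b"
    unfolding NN_def by (subst nn_integral_multc) (auto simp: mult.commute)
  ultimately show ?thesis unfolding c_def by simp
qed


lemma NN_iter:
  assumes b: "b \<ge> 0" and small: "\<And>j. j < n \<Longrightarrow> b * real j * CL \<le> sqrt (2*pi) - sqrt (pi/2)"
  shows "k \<le> n \<Longrightarrow> ennreal (sqrt (pi/2)) ^ k * NN (n - k) 1 b \<le> NN n 1 b"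
proof (induction k)
  case 0 then show ?case by simp
next
  case (Suc k)
  define j where "j = n - Suc k"
  have jn: "j < n" "Suc j = n - k" using Suc.prems unfolding j_def by auto
  have cs: "ennreal (sqrt (pi/2)) \<le> ennreal (sqrt (2*pi) - b * real j * CL)"
    using small[OF jn(1)] by (intro ennreal_leI) linarith
  have "ennreal (sqrt (pi/2)) ^ Suc k * NN (n - Suc k) 1 b
      = ennreal (sqrt (pi/2)) ^ k * (ennreal (sqrt (pi/2)) * NN j 1 b)"
    unfolding j_def by (simp add: mult.assoc mult.commute mult.left_commute)
  also have "\<dots> \<le> ennreal (sqrt (pi/2)) ^ k * (ennreal (sqrt (2*pi) - b * real j * CL) * NN j 1 b)"
    by (intro mult_left_mono mult_right_mono cs) auto
  also have "\<dots> \<le> ennreal (sqrt (pi/2)) ^ k * NN (Suc j) 1 b"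
    by (intro mult_left_mono NN_step b) auto
  also have "\<dots> \<le> NN n 1 b" using Suc jn by simp
  finally show ?case .
qed

lemma PiM_scale:
  fixes c :: real
  assumes "finite I" "c > 0"
  shows "f \<in> borel_measurable (PiM I (\<lambda>_. lborel)) \<Longrightarrow>
    (\<integral>\<^sup>+x. f (\<lambda>l\<in>I. c * x l) \<partial>PiM I (\<lambda>_. lborel)) = ennreal ((1/c) ^ card I) * (\<integral>\<^sup>+x. f x \<partial>PiM I (\<lambda>_. lborel))"
  using assms(1)
proof (induction I arbitrary: f rule: finite_induct)
  case empty
  then show ?case by (simp add: PiM_empty nn_integral_count_space_finite)
next
  case (insert i I)
  interpret product_sigma_finite "\<lambda>_::'a. lborel" by standard
  note fm[measurable] = insert.prems
  have g: "(\<lambda>x. f (\<lambda>l\<in>insert i I. c * x l)) \<in> borel_measurable (PiM (insert i I) (\<lambda>_. lborel))"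
    by measurable
  define G where "G z = (\<integral>\<^sup>+y. f (z(i := y)) \<partial>lborel)" for z
  have Gm: "G \<in> borel_measurable (PiM I (\<lambda>_. lborel))"
  proof -
    have "(\<lambda>(z, y). f (z(i := y))) \<in> borel_measurable (PiM I (\<lambda>_. lborel) \<Otimes>\<^sub>M lborel)"
      using measurable_comp[OF measurable_add_dim[of i I "\<lambda>_. lborel"] fm] by (simp add: comp_def case_prod_beta')
    then show ?thesis unfolding G_def by (intro lborel.borel_measurable_nn_integral) simp
  qed
  have "(\<integral>\<^sup>+x. f (\<lambda>l\<in>insert i I. c * x l) \<partial>PiM (insert i I) (\<lambda>_. lborel))
     = (\<integral>\<^sup>+x. (\<integral>\<^sup>+y. f (\<lambda>l\<in>insert i I. c * (x(i := y)) l) \<partial>lborel) \<partial>PiM I (\<lambda>_. lborel))"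
    by (rule product_nn_integral_insert[OF insert(1,2) g])
  also have "\<dots> = (\<integral>\<^sup>+x. ennreal (1/c) * G (\<lambda>l\<in>I. c * x l) \<partial>PiM I (\<lambda>_. lborel))"
  proof (rule nn_integral_cong)
    fix x :: "'a \<Rightarrow> real" assume x: "x \<in> space (PiM I (\<lambda>_. lborel))"
    define X where "X = (\<lambda>l\<in>I. c * x l)"
    have e: "(\<lambda>l\<in>insert i I. c * (x(i := y)) l) = X(i := c * y)" for y
      using insert(2) by (auto simp: X_def fun_eq_iff)
    have hm: "(\<lambda>y. f (X(i := y))) \<in> borel_measurable borel"
    proof -
      have "X \<in> space (PiM I (\<lambda>_. lborel))" unfolding X_def by (simp add: space_PiM)
      then have "(\<lambda>y. f (X(i := y))) \<in> borel_measurable lborel"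
        using measurable_comp[OF measurable_component_update[of X I "\<lambda>_. lborel" i] fm] insert(2) by (simp add: comp_def)
      then show ?thesis by simp
    qed
    have "G X = ennreal c * (\<integral>\<^sup>+y. f (X(i := 0 + c * y)) \<partial>lborel)"
      unfolding G_def using nn_integral_real_affine[OF hm, of c 0] assms(2) by simp
    then have "ennreal (1/c) * G X = (\<integral>\<^sup>+y. f (X(i := c * y)) \<partial>lborel)"
      using assms(2) by (simp add: mult.assoc[symmetric] ennreal_mult[symmetric])
    then show "(\<integral>\<^sup>+y. f (\<lambda>l\<in>insert i I. c * (x(i := y)) l) \<partial>lborel) = ennreal (1/c) * G (\<lambda>l\<in>I. c * x l)"
      unfolding e X_def by simp
  qed
  also have "\<dots> = ennreal (1/c) * (\<integral>\<^sup>+x. G (\<lambda>l\<in>I. c * x l) \<partial>PiM I (\<lambda>_. lborel))"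
    by (rule nn_integral_cmult) (use Gm in measurable)
  also have "\<dots> = ennreal (1/c) * (ennreal ((1/c) ^ card I) * (\<integral>\<^sup>+x. G x \<partial>PiM I (\<lambda>_. lborel)))"
    using insert.IH[OF Gm] by (simp only:)
  also have "(\<integral>\<^sup>+x. G x \<partial>PiM I (\<lambda>_. lborel)) = (\<integral>\<^sup>+x. f x \<partial>PiM (insert i I) (\<lambda>_. lborel))"
    unfolding G_def by (rule product_nn_integral_insert[OF insert(1,2) fm, symmetric])
  finally show ?case
    using insert(1,2) assms(2) by (simp add: mult.assoc[symmetric] ennreal_mult[symmetric])
qed


lemma sel_scale:
  assumes a: "a > 0"
  shows "selberg_integrand m a b (\<lambda>l\<in>{..<m}. (1 / sqrt a) * x l)
    = selberg_integrand m 1 b x * (1 / (sqrt a powr b) ^ card (pairs m))"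
proof -
  define s where "s = sqrt a"
  have s: "s > 0" "s\<^sup>2 = a" using a unfolding s_def by auto
  have 1: "(\<Sum>i<m. ((\<lambda>l\<in>{..<m}. (1 / s) * x l) i)\<^sup>2) = (\<Sum>i<m. (x i)\<^sup>2) / a"
    using s by (simp add: sum_divide_distrib power_divide)
  have 2: "(\<Prod>p\<in>pairs m. \<bar>(\<lambda>l\<in>{..<m}. (1 / s) * x l) (fst p) - (\<lambda>l\<in>{..<m}. (1 / s) * x l) (snd p)\<bar> powr b)
     = (\<Prod>p\<in>pairs m. \<bar>x (fst p) - x (snd p)\<bar> powr b / s powr b)"
  proof (rule prod.cong)
    fix p assume p: "p \<in> pairs m"
    then have "fst p < m" "snd p < m" by auto
    then have "\<bar>(\<lambda>l\<in>{..<m}. (1 / s) * x l) (fst p) - (\<lambda>l\<in>{..<m}. (1 / s) * x l) (snd p)\<bar>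
       = \<bar>x (fst p) - x (snd p)\<bar> / s" using s by (simp add: field_simps abs_div)
    then show "\<bar>(\<lambda>l\<in>{..<m}. (1 / s) * x l) (fst p) - (\<lambda>l\<in>{..<m}. (1 / s) * x l) (snd p)\<bar> powr b
       = \<bar>x (fst p) - x (snd p)\<bar> powr b / s powr b" using s by (simp add: powr_divide)
  qed simp
  have 3: "(\<Prod>p\<in>pairs m. \<bar>x (fst p) - x (snd p)\<bar> powr b / s powr b)
     = (\<Prod>p\<in>pairs m. \<bar>x (fst p) - x (snd p)\<bar> powr b) * (1 / (s powr b) ^ card (pairs m))"
    by (simp add: prod_dividef)
  show ?thesis
    unfolding selberg_integrand_def s_def[symmetric] 1 2 3 using a by simp
qed

lemma NN_scale:
  assumes a: "a > 0"
  shows "NN m a b = ennreal (1 / (sqrt a ^ m * (sqrt a powr b) ^ card (pairs m))) * NN m 1 b"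
proof -
  define s where "s = sqrt a"
  have s: "s > 0" using a unfolding s_def by auto
  have "(\<integral>\<^sup>+x. ennreal (selberg_integrand m a b (\<lambda>l\<in>{..<m}. (1/s) * x l)) \<partial>PiM {..<m} (\<lambda>_. lborel))
     = ennreal ((1 / (1/s)) ^ card {..<m}) * NN m a b"
    unfolding NN_def using s by (intro PiM_scale) auto
  also have "\<dots> = ennreal (s ^ m) * NN m a b" by simp
  finally have eq1: "(\<integral>\<^sup>+x. ennreal (selberg_integrand m a b (\<lambda>l\<in>{..<m}. (1/s) * x l)) \<partial>PiM {..<m} (\<lambda>_. lborel))
     = ennreal (s ^ m) * NN m a b" .
  have "(\<integral>\<^sup>+x. ennreal (selberg_integrand m a b (\<lambda>l\<in>{..<m}. (1/s) * x l)) \<partial>PiM {..<m} (\<lambda>_. lborel))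
     = (\<integral>\<^sup>+x. ennreal (selberg_integrand m 1 b x) * ennreal (1 / (s powr b) ^ card (pairs m)) \<partial>PiM {..<m} (\<lambda>_. lborel))"
    unfolding s_def using a by (intro nn_integral_cong, subst sel_scale[OF a], subst ennreal_mult[symmetric]) (auto simp: sel_nonneg)
  also have "\<dots> = ennreal (1 / (s powr b) ^ card (pairs m)) * NN m 1 b"
    unfolding NN_def by (subst nn_integral_multc) (auto simp: mult.commute)
  finally have eq2: "ennreal (s ^ m) * NN m a b = ennreal (1 / (s powr b) ^ card (pairs m)) * NN m 1 b"
    using eq1 by simp
  have "NN m a b = ennreal (1 / s ^ m) * (ennreal (s ^ m) * NN m a b)"
    using s by (simp add: mult.assoc[symmetric] ennreal_mult[symmetric])
  also have "\<dots> = ennreal (1 / s ^ m) * ennreal (1 / (s powr b) ^ card (pairs m)) * NN m 1 b"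
    unfolding eq2 by (simp add: mult.assoc)
  also have "\<dots> = ennreal (1 / (s ^ m * (s powr b) ^ card (pairs m))) * NN m 1 b"
    using s by (simp add: ennreal_mult[symmetric])
  finally show ?thesis unfolding s_def .
qed

lemma Zab_ratio:
  assumes a: "a > 0"
  shows "Zab m a b / Zb m b \<le> 1 / (sqrt a ^ m * (sqrt a powr b) ^ card (pairs m))"
proof -
  define K where "K = 1 / (sqrt a ^ m * (sqrt a powr b) ^ card (pairs m))"
  have K: "K \<ge> 0" unfolding K_def using a by simp
  have "Zab m a b = K * Zb m b"
    unfolding Zab_NN Zb_def NN_scale[OF a] K_def[symmetric] using K by (simp add: enn2real_mult)
  moreover have "Zb m b \<ge> 0" unfolding Zb_def Zab_NN by simp
  ultimately show ?thesis using K
    by (cases "Zb m b = 0") (auto simp: K_def[symmetric])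
qed


lemma Zb_ratio:
  assumes b: "b \<ge> 0" and small: "\<And>j. j < n \<Longrightarrow> b * real j * CL \<le> sqrt (2*pi) - sqrt (pi/2)"
    and k: "k \<le> n"
  shows "Zb (n - k) b / Zb n b \<le> sqrt (2 / pi) ^ k"
proof -
  define q where "q = sqrt (pi/2)"
  have q: "q > 0" unfolding q_def by simp
  have it: "ennreal (q ^ k) * NN (n - k) 1 b \<le> NN n 1 b"
    using NN_iter[OF b small k] q unfolding q_def by (simp add: ennreal_power)
  have rhs: "sqrt (2 / pi) ^ k = 1 / q ^ k"
    unfolding q_def by (simp add: real_sqrt_divide power_divide)
  have nn: "Zb (n - k) b \<ge> 0" "Zb n b \<ge> 0" unfolding Zb_def Zab_NN by auto
  show ?thesis
  proof (cases "NN (n - k) 1 b = top \<or> NN n 1 b = top")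
    case True
    then have "NN n 1 b = top" using it q
      by (auto simp: ennreal_mult_top top_unique)
    then have "Zb n b = 0" unfolding Zb_def Zab_NN by simp
    then show ?thesis using q by (simp add: rhs less_imp_le)
  next
    case False
    then have fin: "NN (n - k) 1 b < top" "NN n 1 b < top" by (auto simp: top.not_eq_extremum)
    have "enn2real (ennreal (q ^ k) * NN (n - k) 1 b) \<le> enn2real (NN n 1 b)"
      using it fin by (intro enn2real_mono) auto
    then have le: "q ^ k * Zb (n - k) b \<le> Zb n b"
      unfolding Zb_def Zab_NN using q by (simp add: enn2real_mult)
    show ?thesis
    proof (cases "Zb n b = 0")
      case True then show ?thesis using q by (simp add: rhs less_imp_le)
    next
      case False
      then have pos: "Zb n b > 0" using nn by simp
      have "Zb (n - k) b \<le> Zb n b / q ^ k" using le q by (simp add: field_simps)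
      then show ?thesis unfolding rhs using pos q by (simp add: divide_le_eq field_simps)
    qed
  qed
qed

lemma K_bound:
  fixes e b :: real
  assumes b: "b \<ge> 0" and e: "0 \<le> e" "e \<le> 1/2" and E: "(real m + real P * b) * e \<le> real k / 2"
  shows "1 / (sqrt (1 - e) ^ m * (sqrt (1 - e) powr b) ^ P) \<le> 4 ^ k"
proof -
  define a where "a = 1 - e"
  have a: "a > 0" unfolding a_def using e by simp
  have sa: "sqrt a = exp (ln a / 2)" using a by (simp add: ln_sqrt[symmetric])
  have "sqrt a ^ m * (sqrt a powr b) ^ P = exp ((real m + real P * b) * (ln a / 2))"
    using a unfolding sa
    by (simp add: powr_def exp_of_nat_mult[symmetric] exp_add[symmetric] algebra_simps)
  then have K: "1 / (sqrt a ^ m * (sqrt a powr b) ^ P) = exp ((real m + real P * b) * (- ln a / 2))"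
    by (simp add: exp_minus field_simps)
  have l: "- ln a \<le> 2 * e"
  proof -
    have "e * e \<le> e * (1/2)" using e by (intro mult_left_mono) auto
    then show ?thesis using ln_one_minus_pos_lower_bound[OF e] unfolding a_def by (simp add: power2_eq_square)
  qed
  have mp: "real m + real P * b \<ge> 0" using b by simp
  have "(real m + real P * b) * (- ln a / 2) \<le> (real m + real P * b) * e"
    using l mp by (intro mult_left_mono) auto
  also have "\<dots> \<le> real k / 2" by (rule E)
  finally have "exp ((real m + real P * b) * (- ln a / 2)) \<le> exp (real k / 2)" by simp
  also have "exp (real k / 2) = exp (1/2) ^ k" by (simp add: exp_of_nat_mult[symmetric])
  also have "\<dots> \<le> 4 ^ k"
  proof (rule power_mono)
    have "norm (exp (1/2::real)) \<le> 2" by (rule exp_bound_half) simp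
    then show "exp (1/2::real) \<le> 4" by simp
  qed simp
  finally have K2: "exp ((real m + real P * b) * (- ln a / 2)) \<le> 4 ^ k" .
  have "1 / (sqrt a ^ m * (sqrt a powr b) ^ P) \<le> 4 ^ k" unfolding K by (rule K2)
  then show ?thesis unfolding a_def .
qed

lemma bseq_ge_1:
  fixes d :: real and n :: nat
  assumes L: "ln (real n) \<ge> 32" and d: "d > 0" and dl: "ln d / ln (real n) \<le> 1/8"
  shows "sqrt (2 * ln (real n)) - (ln (ln (real n)) + 2 * ln d + ln (4 * pi)) / (2 * sqrt (2 * ln (real n))) \<ge> 1"
proof -
  define L where "L = ln (real n)"
  have L0: "L \<ge> 32" using L unfolding L_def .
  define r where "r = sqrt (2 * L)"
  have r0: "r > 0" unfolding r_def using L0 by simp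
  have r2: "r * r = 2 * L" unfolding r_def using L0 by simp
  have rL: "r \<le> L / 4"
  proof -
    have "32 * L \<le> L * L" using L0 by (intro mult_right_mono) auto
    then have "2 * L \<le> (L/4)\<^sup>2" by (simp add: power2_eq_square)
    then have "sqrt (2 * L) \<le> sqrt ((L/4)\<^sup>2)" by (rule real_sqrt_le_mono)
    then show ?thesis unfolding r_def using L0 by simp
  qed
  have l1: "ln L \<le> L" using ln_le_minus_one[of L] L0 by simp
  have l2: "ln d \<le> L / 8" using dl L0 unfolding L_def[symmetric] by (simp add: divide_le_eq)
  have l3: "ln (4 * pi) \<le> 15"
    using ln_le_minus_one[of "4 * pi"] pi_less_4 by simp
  have Q: "ln L + 2 * ln d + ln (4 * pi) \<le> (r - 1) * (2 * r)"
    using l1 l2 l3 rL r2 L0 by (simp add: algebra_simps)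
  then have "(ln L + 2 * ln d + ln (4 * pi)) / (2 * r) \<le> r - 1"
    using r0 by (simp add: divide_le_eq)
  then show ?thesis unfolding L_def[symmetric] r_def[symmetric] by simp
qed


theorem lemma2p6:
  fixes \<beta> \<delta> :: "nat \<Rightarrow> real"
  assumes beta_nonneg: "\<And>n. \<beta> n \<ge> 0"
    and beta_lim: "(\<lambda>n. real n * \<beta> n) \<longlonglongrightarrow> 0"
    and delta_pos: "\<And>n. \<delta> n > 0"
    and delta_lim: "(\<lambda>n. ln (\<delta> n) / ln (real n)) \<longlonglongrightarrow> 0"
  shows "\<exists>N. \<forall>n\<ge>N. \<forall>k::nat. 1 \<le> k \<and> k \<le> n \<longrightarrow>
           Zab (n - k) (1 - real k * \<beta> n / (4 * (bseq \<delta> n)\<^sup>2)) (\<beta> n) / Zb (n - k) (\<beta> n)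
             \<le> 4 ^ k
         \<and> Zb (n - k) (\<beta> n) / Zb n (\<beta> n) \<le> (sqrt (2 / pi)) ^ k"
proof -
  define D where "D = sqrt (2*pi) - sqrt (pi/2)"
  have D: "D > 0" unfolding D_def by (simp add: real_sqrt_less_iff)
  define \<eta> where "\<eta> = min 1 (D / (CL + 1))"
  have \<eta>: "\<eta> > 0" unfolding \<eta>_def using D CL_nonneg by simp
  have e1: "eventually (\<lambda>n. real n * \<beta> n < \<eta>) sequentially"
    using order_tendstoD(2)[OF beta_lim \<eta>] .
  have e2: "eventually (\<lambda>n. ln (\<delta> n) / ln (real n) < 1/8) sequentially"
    using order_tendstoD(2)[OF delta_lim, of "1/8"] by simp
  have e3: "eventually (\<lambda>n. real n \<ge> exp 32) sequentially"
    using filterlim_real_sequentially unfolding filterlim_at_top by blast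
  obtain N where N: "\<And>n. n \<ge> N \<Longrightarrow> real n * \<beta> n < \<eta> \<and> ln (\<delta> n) / ln (real n) < 1/8 \<and> real n \<ge> exp 32"
    using eventually_conj[OF e1 eventually_conj[OF e2 e3]] unfolding eventually_sequentially by blast
  show ?thesis
  proof (intro exI allI impI conjI)
    fix n k :: nat assume n: "n \<ge> N" and k: "1 \<le> k \<and> k \<le> n"
    define b where "b = \<beta> n"
    have b: "b \<ge> 0" unfolding b_def by (rule beta_nonneg)
    have nb: "real n * b < \<eta>" using N[OF n] unfolding b_def by simp
    have nb1: "real n * b \<le> 1" using nb unfolding \<eta>_def by simp
    have nbD: "real n * b \<le> D / (CL + 1)" using nb unfolding \<eta>_def by simp
    have small: "b * real j * CL \<le> D" if "j < n" for j
    proof -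
      have "b * real j \<le> b * real n" using that b by (intro mult_left_mono) auto
      also have "\<dots> \<le> D / (CL + 1)" using nbD by (simp add: mult.commute)
      finally have bj: "b * real j \<le> D / (CL + 1)" .
      have "b * real j * CL \<le> D / (CL + 1) * CL" using bj CL_nonneg by (intro mult_right_mono) auto
      also have "\<dots> \<le> D" using D CL_nonneg by (simp add: field_simps)
      finally show ?thesis .
    qed
    show "Zb (n - k) (\<beta> n) / Zb n (\<beta> n) \<le> (sqrt (2 / pi)) ^ k"
      using Zb_ratio[OF b small[unfolded D_def]] k unfolding b_def by auto
    have Ln: "ln (real n) \<ge> 32"
    proof -
      have "exp 32 \<le> real n" using N[OF n] by simp
      then have "ln (exp 32) \<le> ln (real n)" by (intro ln_mono) auto
      then show ?thesis by simp
    qed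
    define B where "B = bseq \<delta> n"
    have B: "B \<ge> 1" unfolding B_def bseq_def
      using bseq_ge_1[OF Ln delta_pos] N[OF n] by simp
    have B2: "B\<^sup>2 \<ge> 1" using B by (simp add: one_le_power)
    define e where "e = real k * b / (4 * B\<^sup>2)"
    have e0: "e \<ge> 0" unfolding e_def using b B2 by simp
    have ekb: "e \<le> real k * b / 4" unfolding e_def using b B2
      by (intro divide_left_mono) auto
    have kb: "real k * b \<le> real n * b" using k b by (intro mult_right_mono) auto
    have e2: "e \<le> 1/2" using ekb kb nb1 by simp
    define m where "m = n - k"
    define P where "P = card (pairs m)"
    have P: "real P \<le> real n * real n"
    proof -
      have "P \<le> m * m" unfolding P_def by (rule pairs_card)
      also have "\<dots> \<le> n * n" unfolding m_def by (intro mult_mono) auto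
      finally show ?thesis by (simp flip: of_nat_mult)
    qed
    have Pb: "real P * b \<le> real n" 
    proof -
      have "real P * b \<le> real n * real n * b" using P b by (intro mult_right_mono) auto
      also have "\<dots> = real n * (real n * b)" by simp
      also have "\<dots> \<le> real n * 1" using nb1 by (intro mult_left_mono) auto
      finally show ?thesis by simp
    qed
    have mn: "real m \<le> real n" unfolding m_def by simp
    have E: "(real m + real P * b) * e \<le> real k / 2"
    proof -
      have "(real m + real P * b) * e \<le> (2 * real n) * (real k * b / 4)"
        using mn Pb ekb e0 b by (intro mult_mono) auto
      also have "\<dots> = real k * (real n * b) / 2" by simp
      also have "\<dots> \<le> real k * 1 / 2" using nb1 by (intro divide_right_mono mult_left_mono) auto
      finally show ?thesis by simp
    qed
    have a: "1 - e > 0" using e2 by simp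
    have "Zab m (1 - e) b / Zb m b \<le> 1 / (sqrt (1 - e) ^ m * (sqrt (1 - e) powr b) ^ P)"
      unfolding P_def by (rule Zab_ratio[OF a])
    also have "\<dots> \<le> 4 ^ k" by (rule K_bound[OF b e0 e2 E])
    finally show "Zab (n - k) (1 - real k * \<beta> n / (4 * (bseq \<delta> n)\<^sup>2)) (\<beta> n) / Zb (n - k) (\<beta> n) \<le> 4 ^ k"
      unfolding m_def e_def B_def b_def .
  qed
qed

end
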